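(* Let $k$ be an even integer, let $f=\sum_{n\ge 1}a(n)q^n\in S_k$ be a normalized Hecke eigenform of level $1$, and let $\nu$ be a nonnegative integer. Then $$\frac{(k+2\nu-1)!}{(k+\nu-1)!}\,\mathcal{S}_1\big([\theta(\tau),f(4\tau)]_{\nu}\big)=[f(\tau),f(\tau)]_{2\nu},$$ where the first bracket is taken with $\theta$ of weight $\tfrac12$ and $f(4\tau)$ of weight $k$, and the second with both entries of weight $k$.
   Context: $q=e^{2\pi i\tau}$, $\tau\in\mathbb H$, and $S_k$ denotes the space of cusp forms of weight $k$ for $\mathrm{SL}_2(\mathbb Z)$. $\theta(\tau)=\sum_{n\in\mathbb Z}q^{n^2}$ is Jacobi's theta function. For holomorphic functions $f_1,f_2$ on $\mathbb H$ regarded as having weights $k_1,k_2$, and $\nu\in\mathbb Z_{\ge0}$, the Rankin–Cohen bracket is $$[f_1,f_2]_\nu=(2\pi i)^{-\nu}\sum_{i=0}^{\nu}(-1)^{\nu-i}\binom{\nu}{i}\frac{\Gamma(k_1+\nu)\Gamma(k_2+\nu)}{\Gamma(k_1+i)\Gamma(k_2+\nu-i)}f_1^{(i)}f_2^{(\nu-i)},$$ where $f^{(i)}$ denotes the $i$-th derivative with respect to $\tau$. For an integer $\lambda$, the first Shimura map $\mathcal S_1$ on forms of weight $\lambda+\tfrac12$ is given on $q$-expansions by $\sum_{n\ge1}c(n)q^n\mapsto\sum_{n\ge1}\Big(\sum_{d\mid n}d^{\lambda-1}c(n^2/d^2)\Big)q^n$; here it is applied with $\lambda=k+2\nu$ to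 $[\theta(\tau),f(4\tau)]_\nu$, which has weight $k+2\nu+\tfrac12$. *)

theory Defs
  imports "HOL-Complex_Analysis.Complex_Analysis"
begin

definition uhp :: "complex set" where
  "uhp = {z. Im z > 0}"

definition qvar :: "complex \<Rightarrow> complex" where
  "qvar \<tau> = exp (2 * of_real pi * \<i> * \<tau>)"

definition modular_transf :: "int \<Rightarrow> (complex \<Rightarrow> complex) \<Rightarrow> bool" where
  "modular_transf k f \<longleftrightarrow>
     (\<forall>a b c d :: int. a * d - b * c = 1 \<longrightarrow>
        (\<forall>z \<in> uhp. f ((of_int a * z + of_int b) / (of_int c * z + of_int d))
                    = (of_int c * z + of_int d) powi k * f z))"

definition has_q_expansion :: "(complex \<Rightarrow> complex) \<Rightarrow> (nat \<Rightarrow> complex) \<Rightarrow> bool" where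
  "has_q_expansion f a \<longleftrightarrow> (\<forall>z \<in> uhp. (\<lambda>n. a n * qvar z ^ n) sums f z)"

text \<open>Cusp form of weight k for SL_2(Z): holomorphic on H, modular, and its
  q-expansion has vanishing constant term (holomorphic and vanishing at the cusp).\<close>
definition is_cusp_form :: "int \<Rightarrow> (complex \<Rightarrow> complex) \<Rightarrow> bool" where
  "is_cusp_form k f \<longleftrightarrow> f holomorphic_on uhp \<and> modular_transf k f \<and>
     (\<exists>a. a 0 = 0 \<and> has_q_expansion f a)"

definition hecke_coeff :: "int \<Rightarrow> nat \<Rightarrow> (nat \<Rightarrow> complex) \<Rightarrow> nat \<Rightarrow> complex" where
  "hecke_coeff k m a n = (\<Sum>d | d dvd gcd m n. of_nat d powi (k - 1) * a (m * n div (d * d)))"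

definition normalized_hecke_eigenform ::
    "int \<Rightarrow> (complex \<Rightarrow> complex) \<Rightarrow> (nat \<Rightarrow> complex) \<Rightarrow> bool" where
  "normalized_hecke_eigenform k f a \<longleftrightarrow>
     is_cusp_form k f \<and> has_q_expansion f a \<and> a 0 = 0 \<and> a 1 = 1 \<and>
     (\<forall>m \<ge> 1. \<exists>ev. \<forall>n. hecke_coeff k m a n = ev * a n)"

definition jtheta :: "complex \<Rightarrow> complex" where
  "jtheta \<tau> = (\<Sum>\<^sub>\<infinity> n :: int. qvar \<tau> ^ nat (n ^ 2))"

definition rankin_cohen ::
    "real \<Rightarrow> real \<Rightarrow> nat \<Rightarrow> (complex \<Rightarrow> complex) \<Rightarrow> (complex \<Rightarrow> complex) \<Rightarrow> complex \<Rightarrow> complex" where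
  "rankin_cohen k1 k2 \<nu> f1 f2 \<tau> =
     inverse ((2 * of_real pi * \<i>) ^ \<nu>) *
     (\<Sum>i = 0..\<nu>. (-1) ^ (\<nu> - i) * of_nat (\<nu> choose i) *
        (Gamma (of_real k1 + of_nat \<nu>) * Gamma (of_real k2 + of_nat \<nu>) /
         (Gamma (of_real k1 + of_nat i) * Gamma (of_real k2 + of_nat (\<nu> - i)))) *
        (deriv ^^ i) f1 \<tau> * (deriv ^^ (\<nu> - i)) f2 \<tau>)"

definition shimura1_coeff :: "int \<Rightarrow> (nat \<Rightarrow> complex) \<Rightarrow> nat \<Rightarrow> complex" where
  "shimura1_coeff lam c n =
     (if n = 0 then 0
      else (\<Sum>d | d dvd n. of_nat d powi (lam - 1) * c ((n div d) ^ 2)))"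

end

theory Submission
  imports Defs "HOL-Computational_Algebra.Polynomial"
begin

lemma coeff_lin_pow: "coeff ([:1, c:] ^ n) i = of_nat (n choose i) * (c :: 'a :: comm_ring_1) ^ i"
proof (induction n arbitrary: i)
  case 0 then show ?case by (cases i) auto
next
  case (Suc n)
  have e: "[:1, c:] ^ Suc n = [:1, c:] ^ n + pCons 0 (smult c ([:1, c:] ^ n))"
    by simp
  show ?case
  proof (cases i)
    case 0 then show ?thesis using Suc by (simp add: e)
  next
    case (Suc j)
    have "coeff ([:1, c:] ^ Suc n) i = of_nat (n choose Suc j) * c ^ Suc j + c * (of_nat (n choose j) * c ^ j)"
      unfolding e Suc coeff_add coeff_pCons_Suc coeff_smult Suc.IH ..
    also have "\<dots> = of_nat (Suc n choose Suc j) * c ^ Suc j"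
      by (simp add: binomial_Suc_Suc ring_distribs mult_ac)
    finally show ?thesis using Suc by simp
  qed
qed

lemma poly_id:
  fixes x y :: "'a :: comm_ring_1"
  shows "(\<Sum>i\<le>2*\<nu>. (-1)^i * of_nat (n choose i) * of_nat (n choose (2*\<nu>-i)) * x^i * y^(2*\<nu>-i))
       = (\<Sum>b\<le>\<nu>. of_nat (n choose b) * of_nat ((n - b) choose (2*\<nu>-2*b)) * (-(x*y))^b * (y-x)^(2*\<nu>-2*b))"
proof -
  define p where "p = ([:1, -x:] * [:1, y:]) ^ n"
  have "coeff p (2*\<nu>) = (\<Sum>i\<le>2*\<nu>. coeff ([:1, -x:] ^ n) i * coeff ([:1, y:] ^ n) (2*\<nu> - i))"
    unfolding p_def power_mult_distrib coeff_mult ..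
  also have "\<dots> = (\<Sum>i\<le>2*\<nu>. (-1)^i * of_nat (n choose i) * of_nat (n choose (2*\<nu>-i)) * x^i * y^(2*\<nu>-i))"
    unfolding coeff_lin_pow by (rule sum.cong) (auto simp: power_minus[of x] algebra_simps)
  finally have L: "coeff p (2*\<nu>) = \<dots>" .
  have e: "[:1, -x:] * [:1, y:] = monom (-(x*y)) 2 + [:1, y - x:]"
    by (simp add: monom_Suc monom_0 numeral_2_eq_2 algebra_simps)
  have "p = (\<Sum>b\<le>n. of_nat (n choose b) * (monom (-(x*y)) 2)^b * [:1, y - x:]^(n-b))"
    unfolding p_def e by (rule binomial_ring)
  hence "coeff p (2*\<nu>) = (\<Sum>b\<le>n. of_nat (n choose b) * coeff (monom ((-(x*y))^b) (2*b) * [:1, y - x:]^(n-b)) (2*\<nu>))"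
    by (simp add: coeff_sum monom_power of_nat_poly mult.commute[of 2] mult.assoc)
  also have "\<dots> = (\<Sum>b\<le>n. if \<nu> < b then 0 else of_nat (n choose b) * of_nat ((n - b) choose (2*\<nu>-2*b)) * (-(x*y))^b * (y-x)^(2*\<nu>-2*b))"
    unfolding coeff_monom_mult coeff_lin_pow by (rule sum.cong) (auto simp: algebra_simps)
  also have "\<dots> = (\<Sum>b\<le>n+\<nu>. if \<nu> < b then 0 else of_nat (n choose b) * of_nat ((n - b) choose (2*\<nu>-2*b)) * (-(x*y))^b * (y-x)^(2*\<nu>-2*b))"
    by (rule sum.mono_neutral_left) (auto simp: binomial_eq_0)
  also have "\<dots> = (\<Sum>b\<le>\<nu>. of_nat (n choose b) * of_nat ((n - b) choose (2*\<nu>-2*b)) * (-(x*y))^b * (y-x)^(2*\<nu>-2*b))"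
    by (rule sum.mono_neutral_cong_right) auto
  finally show ?thesis using L by simp
qed

lemma qexp_cong:
  assumes "has_q_expansion f b" "\<And>z. z \<in> uhp \<Longrightarrow> f z = g z" "\<And>n. b n = c n"
  shows "has_q_expansion g c"
  using assms unfolding has_q_expansion_def by auto

lemma norm_qvar: "norm (qvar z) = exp (- 2 * pi * Im z)"
  unfolding qvar_def by (simp add: norm_exp_eq_Re)

lemma qexp_bigger:
  assumes "has_q_expansion f b" "z \<in> uhp"
  shows "\<exists>K. norm (qvar z) < norm K \<and> summable (\<lambda>n. b n * K ^ n)"
proof -
  define z' where "z' = complex_of_real (Re z) + \<i> * complex_of_real (Im z / 2)"
  have iz: "Im z > 0" using assms(2) by (simp add: uhp_def)
  have "z' \<in> uhp" using iz by (simp add: uhp_def z'_def)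
  hence "(\<lambda>n. b n * qvar z' ^ n) sums f z'" using assms(1) by (simp add: has_q_expansion_def)
  moreover have "norm (qvar z) < norm (qvar z')"
    using iz by (simp add: norm_qvar z'_def)
  ultimately show ?thesis by (blast dest: sums_summable)
qed

lemma qexp_eq:
  assumes "has_q_expansion f b" "z \<in> uhp"
  shows "f z = (\<Sum>n. b n * qvar z ^ n)"
  using assms by (simp add: has_q_expansion_def sums_unique)

lemma open_uhp: "open uhp"
  unfolding uhp_def by (rule open_halfspace_Im_gt)

lemma qvar_deriv: "(qvar has_field_derivative (2 * of_real pi * \<i> * qvar z)) (at z)"
  unfolding qvar_def by (auto intro!: derivative_eq_intros)

lemma qexp_deriv:
  assumes "has_q_expansion f b"
  shows "has_q_expansion (deriv f) (\<lambda>n. (2 * of_real pi * \<i> * of_nat n) * b n)"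
  unfolding has_q_expansion_def
proof
  fix z assume z: "z \<in> uhp"
  obtain K where K: "norm (qvar z) < norm K" "summable (\<lambda>n. b n * K ^ n)"
    using qexp_bigger[OF assms z] by blast
  define F where "F = (\<lambda>w. \<Sum>n. b n * w ^ n)"
  define q where "q = qvar z"
  have dF: "(F has_field_derivative (\<Sum>n. diffs b n * q ^ n)) (at q)"
    unfolding F_def q_def by (rule termdiffs_strong[OF K(2) K(1)])
  have sd: "summable (\<lambda>n. diffs b n * q ^ n)"
    by (rule termdiff_converges[where K="norm K"]) (use K(1) powser_inside[OF K(2)] in \<open>auto simp: q_def\<close>)
  have comp: "((\<lambda>w. F (qvar w)) has_field_derivative
      ((\<Sum>n. diffs b n * q ^ n) * (2 * of_real pi * \<i> * q))) (at z)"
    using DERIV_chain2[OF dF[unfolded q_def] qvar_deriv[of z]] by (simp add: q_def)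
  have eqF: "\<And>w. w \<in> uhp \<Longrightarrow> f w = F (qvar w)"
    using qexp_eq[OF assms] by (simp add: F_def)
  have "(f has_field_derivative
      ((\<Sum>n. diffs b n * q ^ n) * (2 * of_real pi * \<i> * q))) (at z)"
    by (rule has_field_derivative_transform_within_open[OF comp open_uhp z]) (simp add: eqF)
  hence dz: "deriv f z = (\<Sum>n. diffs b n * q ^ n) * (2 * of_real pi * \<i> * q)"
    by (rule DERIV_imp_deriv)
  have s1: "(\<lambda>n. of_nat n * b n * q^(n - Suc 0)) sums (\<Sum>n. diffs b n * q ^ n)"
    by (rule diffs_equiv[OF sd])
  have s2: "(\<lambda>n. (of_nat n * b n * q^(n - Suc 0)) * (2 * of_real pi * \<i> * q)) sums
      ((\<Sum>n. diffs b n * q ^ n) * (2 * of_real pi * \<i> * q))"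
    by (rule sums_mult2[OF s1])
  have "(\<lambda>n. (of_nat n * b n * q^(n - Suc 0)) * (2 * of_real pi * \<i> * q)) =
        (\<lambda>n. (2 * of_real pi * \<i> * of_nat n) * b n * q ^ n)"
  proof
    fix n show "(of_nat n * b n * q^(n - Suc 0)) * (2 * of_real pi * \<i> * q) =
        (2 * of_real pi * \<i> * of_nat n) * b n * q ^ n"
      by (cases n) (auto simp: algebra_simps)
  qed
  note eq = this
  have "(\<lambda>n. (2 * of_real pi * \<i> * of_nat n) * b n * q ^ n) sums deriv f z"
    using s2 unfolding eq dz[symmetric] .
  then show "(\<lambda>n. (2 * of_real pi * \<i> * of_nat n) * b n * qvar z ^ n) sums deriv f z"
    unfolding q_def .
qed

lemma qexp_deriv_iter:
  assumes "has_q_expansion f b"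
  shows "has_q_expansion ((deriv ^^ j) f) (\<lambda>n. (2 * of_real pi * \<i> * of_nat n) ^ j * b n)"
proof (induction j)
  case 0 then show ?case using assms by simp
next
  case (Suc j)
  show ?case
    by (rule qexp_cong[OF qexp_deriv[OF Suc]]) (simp_all only: funpow.simps comp_apply power_Suc mult.assoc)
qed

lemma qexp_mult:
  assumes "has_q_expansion f1 b1" "has_q_expansion f2 b2"
  shows "has_q_expansion (\<lambda>z. f1 z * f2 z) (\<lambda>n. \<Sum>j\<le>n. b1 j * b2 (n - j))"
  unfolding has_q_expansion_def
proof
  fix z assume z: "z \<in> uhp"
  obtain K1 where K1: "norm (qvar z) < norm K1" "summable (\<lambda>n. b1 n * K1 ^ n)"
    using qexp_bigger[OF assms(1) z] by blast
  obtain K2 where K2: "norm (qvar z) < norm K2" "summable (\<lambda>n. b2 n * K2 ^ n)"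
    using qexp_bigger[OF assms(2) z] by blast
  have a1: "summable (\<lambda>n. norm (b1 n * qvar z ^ n))" by (rule powser_insidea[OF K1(2) K1(1)])
  have a2: "summable (\<lambda>n. norm (b2 n * qvar z ^ n))" by (rule powser_insidea[OF K2(2) K2(1)])
  have cp: "(\<lambda>k. \<Sum>i\<le>k. (b1 i * qvar z ^ i) * (b2 (k - i) * qvar z ^ (k - i))) sums
     ((\<Sum>k. b1 k * qvar z ^ k) * (\<Sum>k. b2 k * qvar z ^ k))"
    by (rule Cauchy_product_sums[OF a1 a2])
  have eq: "(\<lambda>k. \<Sum>i\<le>k. (b1 i * qvar z ^ i) * (b2 (k - i) * qvar z ^ (k - i))) =
      (\<lambda>k. (\<Sum>j\<le>k. b1 j * b2 (k - j)) * qvar z ^ k)"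
  proof
    fix k show "(\<Sum>i\<le>k. (b1 i * qvar z ^ i) * (b2 (k - i) * qvar z ^ (k - i))) =
      (\<Sum>j\<le>k. b1 j * b2 (k - j)) * qvar z ^ k"
      unfolding sum_distrib_right
    proof (rule sum.cong[OF refl])
      fix i assume "i \<in> {..k}"
      hence "qvar z ^ i * qvar z ^ (k - i) = qvar z ^ k" by (simp flip: power_add)
      moreover have "(b1 i * qvar z ^ i) * (b2 (k - i) * qvar z ^ (k - i)) =
         b1 i * b2 (k - i) * (qvar z ^ i * qvar z ^ (k - i))" by (simp only: mult_ac)
      ultimately show "(b1 i * qvar z ^ i) * (b2 (k - i) * qvar z ^ (k - i)) =
         b1 i * b2 (k - i) * qvar z ^ k" by simp
    qed
  qed
  show "(\<lambda>n. (\<Sum>j\<le>n. b1 j * b2 (n - j)) * qvar z ^ n) sums (f1 z * f2 z)"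
    using cp unfolding eq qexp_eq[OF assms(1) z, symmetric] qexp_eq[OF assms(2) z, symmetric] .
qed

lemma qexp_cmult:
  assumes "has_q_expansion f b"
  shows "has_q_expansion (\<lambda>z. c * f z) (\<lambda>n. c * b n)"
  unfolding has_q_expansion_def
proof
  fix z assume "z \<in> uhp"
  hence "(\<lambda>n. b n * qvar z ^ n) sums f z" using assms by (simp add: has_q_expansion_def)
  from sums_mult[OF this, of c] show "(\<lambda>n. c * b n * qvar z ^ n) sums (c * f z)"
    by (simp add: mult.assoc)
qed

lemma qexp_sum:
  assumes "\<And>i. i \<in> A \<Longrightarrow> has_q_expansion (g i) (b i)"
  shows "has_q_expansion (\<lambda>z. \<Sum>i\<in>A. g i z) (\<lambda>n. \<Sum>i\<in>A. b i n)"
  unfolding has_q_expansion_def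
proof
  fix z assume z: "z \<in> uhp"
  have "(\<lambda>n. \<Sum>i\<in>A. b i n * qvar z ^ n) sums (\<Sum>i\<in>A. g i z)"
    by (rule sums_sum) (use assms z in \<open>auto simp: has_q_expansion_def\<close>)
  then show "(\<lambda>n. (\<Sum>i\<in>A. b i n) * qvar z ^ n) sums (\<Sum>i\<in>A. g i z)"
    by (simp only: sum_distrib_right)
qed

definition G_rc :: "real \<Rightarrow> real \<Rightarrow> nat \<Rightarrow> nat \<Rightarrow> complex" where
  "G_rc k1 k2 \<nu> i = (-1) ^ (\<nu> - i) * of_nat (\<nu> choose i) *
        (Gamma (of_real k1 + of_nat \<nu>) * Gamma (of_real k2 + of_nat \<nu>) /
         (Gamma (of_real k1 + of_nat i) * Gamma (of_real k2 + of_nat (\<nu> - i))))"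

lemma gamma_int: "Gamma (of_real (real_of_int k) + of_nat m :: complex) =
   (if k + int m > 0 then fact (nat (k + int m - 1)) else 0)"
proof -
  have e: "(of_real (real_of_int k) + of_nat m :: complex) = of_int (k + int m)" by simp
  show ?thesis unfolding e by (rule Gamma_of_int)
qed

lemma half_not_nonpos: "(of_real (1/2) + of_nat m :: complex) \<notin> \<int>\<^sub>\<le>\<^sub>0"
proof
  assume "(of_real (1/2) + of_nat m :: complex) \<in> \<int>\<^sub>\<le>\<^sub>0"
  then obtain j :: nat where "(of_real (1/2) + of_nat m :: complex) = - of_nat j"
    by (auto elim!: nonpos_Ints_cases')
  hence "Re (of_real (1/2) + of_nat m :: complex) = Re (- of_nat j)" by simp
  hence "1/2 + real m = - real j" by simp
  thus False by linarith
qed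

lemma gamma_half: "Gamma (of_real (1/2) + of_nat m :: complex) =
   Gamma (of_real (1/2)) * fact (2*m) / (4^m * fact m)"
proof (induction m)
  case 0 then show ?case by simp
next
  case (Suc m)
  have "Gamma (of_real (1/2) + of_nat (Suc m) :: complex) = Gamma ((of_real (1/2) + of_nat m) + 1)"
    by (simp add: add.assoc)
  also have "\<dots> = (of_real (1/2) + of_nat m) * Gamma (of_real (1/2) + of_nat m)"
    by (rule Gamma_plus1[OF half_not_nonpos])
  also have "\<dots> = (of_real (1/2) + of_nat m) * (Gamma (of_real (1/2)) * fact (2*m) / (4^m * fact m))"
    by (simp only: Suc.IH)
  also have "\<dots> = Gamma (of_real (1/2)) * fact (2 * Suc m) / (4 ^ Suc m * fact (Suc m))"
  proof -
    define p :: complex where "p = of_nat m + 1"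
    have f2: "(fact (2 * Suc m) :: complex) = fact (2*m) * (2 * of_nat m + 1) * (2 * p)"
      by (simp add: algebra_simps p_def)
    have nz: "p \<noteq> 0" unfolding p_def
      by (metis Suc_neq_Zero add.commute of_nat_Suc of_nat_eq_0_iff)
    have f1: "(fact (Suc m) :: complex) = fact m * p" by (simp add: algebra_simps p_def)
    have M: "(fact m :: complex) \<noteq> 0" by simp
    show ?thesis unfolding f2 f1 using nz M by (simp add: field_simps)
  qed
  finally show ?case .
qed

lemma neg1_pow_diff: "i \<le> 2 * \<nu> \<Longrightarrow> (-1 :: complex) ^ (2 * \<nu> - i) = (-1) ^ i"
  by (simp add: minus_one_power_iff)

lemma H_coeff:
  assumes i: "i \<le> 2 * \<nu>" and kp: "k + 2 * int \<nu> \<ge> 1"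
  shows "G_rc (real_of_int k) (real_of_int k) (2 * \<nu>) i =
     fact (2 * \<nu>) * (-1) ^ i * of_nat (nat (k + 2 * int \<nu> - 1) choose i) *
       of_nat (nat (k + 2 * int \<nu> - 1) choose (2 * \<nu> - i))"
proof -
  define n where "n = nat (k + 2 * int \<nu> - 1)"
  have nk: "int n = k + 2 * int \<nu> - 1" using kp by (simp add: n_def)
  have g2: "Gamma (of_real (real_of_int k) + of_nat (2 * \<nu>) :: complex) = fact n"
    unfolding gamma_int using kp by (simp add: n_def)
  have sgn: "(-1 :: complex) ^ (2 * \<nu> - i) = (-1) ^ i" by (rule neg1_pow_diff[OF i])
  show ?thesis
  proof (cases "k + int i > 0 \<and> k + int (2 * \<nu> - i) > 0")
    case True
    have i1: "i \<le> n" "2 * \<nu> - i \<le> n" using True i nk by linarith+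
    have e1: "nat (k + int i - 1) = n - (2 * \<nu> - i)" using True i nk by linarith
    have e2: "nat (k + int (2 * \<nu> - i) - 1) = n - i" using True i nk by linarith
    have gi: "Gamma (of_real (real_of_int k) + of_nat i :: complex) = fact (n - (2 * \<nu> - i))"
      unfolding gamma_int using True e1 by simp
    have gj: "Gamma (of_real (real_of_int k) + of_nat (2 * \<nu> - i) :: complex) = fact (n - i)"
      unfolding gamma_int using True e2 by simp
    have b1: "(of_nat (2 * \<nu> choose i) :: complex) = fact (2*\<nu>) / (fact i * fact (2*\<nu> - i))"
      by (rule binomial_fact[OF i])
    have b2: "(of_nat (n choose i) :: complex) = fact n / (fact i * fact (n - i))"
      by (rule binomial_fact[OF i1(1)])
    have b3: "(of_nat (n choose (2*\<nu> - i)) :: complex) = fact n / (fact (2*\<nu> - i) * fact (n - (2*\<nu> - i)))"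
      by (rule binomial_fact[OF i1(2)])
    show ?thesis unfolding G_rc_def g2 gi gj sgn b1 n_def[symmetric] b2 b3
      by (simp add: field_simps)
  next
    case False
    hence z: "Gamma (of_real (real_of_int k) + of_nat i :: complex) *
              Gamma (of_real (real_of_int k) + of_nat (2 * \<nu> - i)) = 0"
      unfolding gamma_int by auto
    have "n choose i = 0 \<or> n choose (2 * \<nu> - i) = 0"
    proof (cases "k + int i > 0")
      case True
      with False have "n < i" using i nk by linarith
      thus ?thesis by simp
    next
      case False
      hence "n < 2 * \<nu> - i" using i nk by linarith
      thus ?thesis by simp
    qed
    thus ?thesis unfolding G_rc_def z n_def[symmetric] by auto
  qed
qed

lemma fid:
  fixes fn fm0 fv fb fvb Gh f2v f2vb fr fnb q1 q2 s :: complex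
  assumes "fm0 \<noteq> 0" "fv \<noteq> 0" "fb \<noteq> 0" "fvb \<noteq> 0" "Gh \<noteq> 0" "f2v \<noteq> 0" "f2vb \<noteq> 0" "fr \<noteq> 0" "fnb \<noteq> 0" "q1 \<noteq> 0" "q2 \<noteq> 0"
  shows "fn / fm0 * (s * (fv / (fb * fvb)) * (Gh * f2v / (q1 * q2 * fv) * fm0 / (Gh * f2vb / (q2 * fvb) * fr))) * q1
     = s * f2v * (fn / (fb * fnb)) * (fnb / (f2vb * fr))"
  using assms by (simp add: field_simps)

lemma Gc_coeff:
  assumes b: "b \<le> \<nu>" and kp: "k + 2 * int \<nu> \<ge> 1"
  shows "(fact (nat (k + 2 * int \<nu> - 1)) / fact (nat (k + int \<nu> - 1))) *
           G_rc (1/2) (real_of_int k) \<nu> (\<nu> - b) * 4 ^ b =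
     (-1) ^ b * fact (2 * \<nu>) * of_nat (nat (k + 2 * int \<nu> - 1) choose b) *
       of_nat ((nat (k + 2 * int \<nu> - 1) - b) choose (2 * \<nu> - 2 * b))"
proof -
  define n where "n = nat (k + 2 * int \<nu> - 1)"
  have nk: "int n = k + 2 * int \<nu> - 1" using kp by (simp add: n_def)
  have vb: "\<nu> - (\<nu> - b) = b" using b by simp
  have G: "G_rc (1/2) (real_of_int k) \<nu> (\<nu> - b) = (-1) ^ b * of_nat (\<nu> choose b) *
      (Gamma (of_real (1/2) + of_nat \<nu>) * Gamma (of_real (real_of_int k) + of_nat \<nu>) /
       (Gamma (of_real (1/2) + of_nat (\<nu> - b)) * Gamma (of_real (real_of_int k) + of_nat b)))"
    unfolding G_rc_def vb binomial_symmetric[OF b, symmetric] ..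
  show ?thesis
  proof (cases "k + int \<nu> > 0 \<and> k + int b > 0")
    case True
    define m0 where "m0 = nat (k + int \<nu> - 1)"
    define r where "r = nat (k + int b - 1)"
    have i1: "b \<le> n" "2 * \<nu> - 2 * b \<le> n - b" using True b nk by linarith+
    have rr: "n - b - (2 * \<nu> - 2 * b) = r" using True b nk by (simp add: r_def)
    have g1: "Gamma (of_real (real_of_int k) + of_nat \<nu> :: complex) = fact m0"
      unfolding gamma_int m0_def using True by simp
    have g2: "Gamma (of_real (real_of_int k) + of_nat b :: complex) = fact r"
      unfolding gamma_int r_def using True by simp
    have b1: "(of_nat (\<nu> choose b) :: complex) = fact \<nu> / (fact b * fact (\<nu> - b))"
      by (rule binomial_fact[OF b])
    have b2: "(of_nat (n choose b) :: complex) = fact n / (fact b * fact (n - b))"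
      by (rule binomial_fact[OF i1(1)])
    have b3: "(of_nat ((n - b) choose (2*\<nu> - 2*b)) :: complex) = fact (n - b) / (fact (2*\<nu> - 2*b) * fact r)"
      using binomial_fact[OF i1(2)] unfolding rr .
    have h1: "Gamma (of_real (1/2) + of_nat \<nu> :: complex) = Gamma (of_real (1/2)) * fact (2*\<nu>) / (4^\<nu> * fact \<nu>)"
      by (rule gamma_half)
    have h2: "Gamma (of_real (1/2) + of_nat (\<nu> - b) :: complex) = Gamma (of_real (1/2)) * fact (2*\<nu> - 2*b) / (4^(\<nu> - b) * fact (\<nu> - b))"
      using gamma_half[of "\<nu> - b"] by (simp add: diff_mult_distrib2)
    have p4: "(4::complex) ^ \<nu> = 4 ^ b * 4 ^ (\<nu> - b)" using b by (simp flip: power_add)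
    have gh: "Gamma (of_real (1/2) :: complex) \<noteq> 0"
      using Gamma_nonzero[OF half_not_nonpos[of 0]] by simp
    have fm: "fact (nat (k + int \<nu> - 1)) = (fact m0 :: complex)" by (simp add: m0_def)
    show ?thesis unfolding G g1 g2 h1 h2 b1 n_def[symmetric] fm b2 b3 p4
      by (rule fid) (rule gh | simp)+
  next
    case False
    have z: "Gamma (of_real (real_of_int k) + of_nat \<nu> :: complex) = 0 \<or>
             Gamma (of_real (real_of_int k) + of_nat b :: complex) = 0"
      unfolding gamma_int using False by auto
    have Gz: "G_rc (1/2) (real_of_int k) \<nu> (\<nu> - b) = 0"
      using z
    proof
      assume "Gamma (of_real (real_of_int k) + of_nat \<nu> :: complex) = 0"
      thus ?thesis unfolding G by simp
    next
      assume "Gamma (of_real (real_of_int k) + of_nat b :: complex) = 0"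
      thus ?thesis unfolding G by simp
    qed
    have "n choose b = 0 \<or> (n - b) choose (2 * \<nu> - 2 * b) = 0"
    proof (cases "b \<le> n")
      case True
      hence "n - b < 2 * \<nu> - 2 * b" using False b nk by linarith
      thus ?thesis by simp
    next
      case False
      thus ?thesis by simp
    qed
    thus ?thesis
    proof
      assume "n choose b = 0" thus ?thesis using Gz by (simp add: n_def)
    next
      assume "(n - b) choose (2 * \<nu> - 2 * b) = 0" thus ?thesis using Gz by (simp add: n_def)
    qed
  qed
qed

lemma rc_qexp:
  assumes h1: "has_q_expansion f1 b1" and h2: "has_q_expansion f2 b2"
  shows "has_q_expansion (rankin_cohen k1 k2 \<nu> f1 f2)
     (\<lambda>n. \<Sum>i = 0..\<nu>. G_rc k1 k2 \<nu> i *
        (\<Sum>j\<le>n. (of_nat j) ^ i * b1 j * ((of_nat (n - j)) ^ (\<nu> - i) * b2 (n - j))))"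
proof -
  define C where "C = 2 * of_real pi * \<i>"
  have C0: "C \<noteq> 0" by (simp add: C_def)
  have t: "has_q_expansion (\<lambda>z. G_rc k1 k2 \<nu> i * ((deriv ^^ i) f1 z * (deriv ^^ (\<nu> - i)) f2 z))
     (\<lambda>n. G_rc k1 k2 \<nu> i * (\<Sum>j\<le>n. ((C * of_nat j) ^ i * b1 j) * ((C * of_nat (n - j)) ^ (\<nu> - i) * b2 (n - j))))" for i
    unfolding C_def by (intro qexp_cmult qexp_mult qexp_deriv_iter h1 h2)
  have s: "has_q_expansion (\<lambda>z. inverse (C ^ \<nu>) * (\<Sum>i=0..\<nu>. G_rc k1 k2 \<nu> i * ((deriv ^^ i) f1 z * (deriv ^^ (\<nu> - i)) f2 z)))
     (\<lambda>n. inverse (C ^ \<nu>) * (\<Sum>i=0..\<nu>. G_rc k1 k2 \<nu> i * (\<Sum>j\<le>n. ((C * of_nat j) ^ i * b1 j) * ((C * of_nat (n - j)) ^ (\<nu> - i) * b2 (n - j)))))"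
    by (intro qexp_cmult qexp_sum t)
  show ?thesis
  proof (rule qexp_cong[OF s])
    fix z show "inverse (C ^ \<nu>) * (\<Sum>i=0..\<nu>. G_rc k1 k2 \<nu> i * ((deriv ^^ i) f1 z * (deriv ^^ (\<nu> - i)) f2 z))
       = rankin_cohen k1 k2 \<nu> f1 f2 z"
      unfolding rankin_cohen_def G_rc_def C_def by (simp add: mult.assoc)
  next
    fix n
    have "inverse (C ^ \<nu>) * (G_rc k1 k2 \<nu> i * (\<Sum>j\<le>n. ((C * of_nat j) ^ i * b1 j) * ((C * of_nat (n - j)) ^ (\<nu> - i) * b2 (n - j))))
       = G_rc k1 k2 \<nu> i * (\<Sum>j\<le>n. (of_nat j) ^ i * b1 j * ((of_nat (n - j)) ^ (\<nu> - i) * b2 (n - j)))"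
      if i: "i \<in> {0..\<nu>}" for i
    proof -
      have Ci: "C ^ i * C ^ (\<nu> - i) = C ^ \<nu>" using i by (simp flip: power_add)
      have "(\<Sum>j\<le>n. ((C * of_nat j) ^ i * b1 j) * ((C * of_nat (n - j)) ^ (\<nu> - i) * b2 (n - j)))
          = C ^ \<nu> * (\<Sum>j\<le>n. (of_nat j) ^ i * b1 j * ((of_nat (n - j)) ^ (\<nu> - i) * b2 (n - j)))"
        unfolding sum_distrib_left
      proof (rule sum.cong[OF refl])
        fix j
        show "((C * of_nat j) ^ i * b1 j) * ((C * of_nat (n - j)) ^ (\<nu> - i) * b2 (n - j))
          = C ^ \<nu> * ((of_nat j) ^ i * b1 j * ((of_nat (n - j)) ^ (\<nu> - i) * b2 (n - j)))"
          unfolding power_mult_distrib Ci[symmetric] by (simp only: mult_ac)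
      qed
      thus ?thesis using C0 by (simp add: field_simps)
    qed
    then show "inverse (C ^ \<nu>) * (\<Sum>i=0..\<nu>. G_rc k1 k2 \<nu> i * (\<Sum>j\<le>n. ((C * of_nat j) ^ i * b1 j) * ((C * of_nat (n - j)) ^ (\<nu> - i) * b2 (n - j))))
      = (\<Sum>i = 0..\<nu>. G_rc k1 k2 \<nu> i *
        (\<Sum>j\<le>n. (of_nat j) ^ i * b1 j * ((of_nat (n - j)) ^ (\<nu> - i) * b2 (n - j))))"
      unfolding sum_distrib_left by (rule sum.cong[OF refl])
  qed
qed

lemma qvar_mult4: "qvar (4 * z) = qvar z ^ 4"
  unfolding qvar_def by (simp flip: exp_of_nat_mult add: algebra_simps)

lemma qexp_scale4:
  assumes "has_q_expansion f a"
  shows "has_q_expansion (\<lambda>z. f (4 * z)) (\<lambda>n. if 4 dvd n then a (n div 4) else 0)"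
  unfolding has_q_expansion_def
proof
  fix z assume z: "z \<in> uhp"
  hence "4 * z \<in> uhp" by (simp add: uhp_def)
  hence s: "(\<lambda>n. a n * qvar (4 * z) ^ n) sums f (4 * z)" using assms by (simp add: has_q_expansion_def)
  define h where "h = (\<lambda>n. (if 4 dvd n then a (n div 4) else 0) * qvar z ^ n)"
  have "(\<lambda>n. h (4 * n)) = (\<lambda>n. a n * qvar (4 * z) ^ n)"
    by (rule ext) (simp add: h_def qvar_mult4 power_mult)
  with s have "(\<lambda>n. h (4 * n)) sums f (4 * z)" by simp
  moreover have "strict_mono (\<lambda>n::nat. 4 * n)" by (rule strict_monoI) simp
  moreover have "h n = 0" if "n \<notin> range (\<lambda>n::nat. 4 * n)" for n
    using that by (auto simp: h_def)
  ultimately have "h sums f (4 * z)" using sums_mono_reindex by blast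
  thus "(\<lambda>n. (if 4 dvd n then a (n div 4) else 0) * qvar z ^ n) sums f (4 * z)"
    by (simp add: h_def)
qed

definition th :: "nat \<Rightarrow> complex" where
  "th n = (if n = 0 then 1 else if (\<exists>m. n = m ^ 2) then 2 else 0)"

lemma norm_qvar_lt1: "z \<in> uhp \<Longrightarrow> norm (qvar z) < 1"
  by (simp add: norm_qvar uhp_def)

lemma theta_qexp: "has_q_expansion jtheta th"
  unfolding has_q_expansion_def
proof
  fix z assume z: "z \<in> uhp"
  define q where "q = qvar z"
  have q1: "norm q < 1" using norm_qvar_lt1[OF z] by (simp add: q_def)
  define u where "u = (\<lambda>m::nat. q ^ (m ^ 2))"
  have nu: "summable (\<lambda>m. norm (u m))"
  proof (rule summable_comparison_test[OF _ summable_geometric[of "norm q"]])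
    show "\<exists>N. \<forall>n\<ge>N. norm (norm (u n)) \<le> norm q ^ n"
    proof (intro exI allI impI)
      fix n :: nat assume "n \<ge> 0"
      have "n \<le> n ^ 2" by (simp add: power2_eq_square)
      hence "norm q ^ (n ^ 2) \<le> norm q ^ n"
        using q1 by (intro power_decreasing) auto
      thus "norm (norm (u n)) \<le> norm q ^ n" by (simp add: u_def norm_power)
    qed
  qed (use q1 in simp)
  define v where "v = (\<lambda>m. u (Suc m))"
  have nv: "summable (\<lambda>m. norm (v m))" using nu unfolding v_def by (rule summable_ignore_initial_segment[where k=1, simplified])
  define T where "T = suminf v"
  have vs: "v sums T" using summable_norm_cancel[OF nv] by (simp add: T_def summable_sums)
  have vh: "(v has_sum T) UNIV" by (rule norm_summable_imp_has_sum[OF nv vs])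
  define g where "g = (\<lambda>m::int. q ^ nat (m ^ 2))"
  have gP: "(g has_sum T) ((\<lambda>m::nat. int m + 1) ` UNIV)"
  proof (subst has_sum_reindex)
    show "inj_on (\<lambda>m::nat. int m + 1) UNIV" by (rule inj_onI) simp
    have "(g \<circ> (\<lambda>m::nat. int m + 1)) = v"
    proof
      fix m :: nat
      have "nat ((int m + 1) ^ 2) = (Suc m) ^ 2" by (simp add: nat_power_eq)
      thus "(g \<circ> (\<lambda>m::nat. int m + 1)) m = v m" by (simp add: g_def v_def u_def)
    qed
    thus "((g \<circ> (\<lambda>m::nat. int m + 1)) has_sum T) UNIV" using vh by simp
  qed
  have gN: "(g has_sum T) ((\<lambda>m::nat. - int m - 1) ` UNIV)"
  proof (subst has_sum_reindex)
    show "inj_on (\<lambda>m::nat. - int m - 1) UNIV" by (rule inj_onI) simp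
    have "(g \<circ> (\<lambda>m::nat. - int m - 1)) = v"
    proof
      fix m :: nat
      have "(- int m - 1) ^ 2 = (int m + 1) ^ 2" by (simp add: power2_eq_square algebra_simps)
      hence "nat ((- int m - 1) ^ 2) = (Suc m) ^ 2" by (simp add: nat_power_eq)
      thus "(g \<circ> (\<lambda>m::nat. - int m - 1)) m = v m" by (simp add: g_def v_def u_def)
    qed
    thus "((g \<circ> (\<lambda>m::nat. - int m - 1)) has_sum T) UNIV" using vh by simp
  qed
  have gPN: "(g has_sum (T + T)) ((\<lambda>m::nat. int m + 1) ` UNIV \<union> (\<lambda>m::nat. - int m - 1) ` UNIV)"
    by (rule has_sum_Un_disjoint[OF gP gN]) auto
  have "(g has_sum (g 0 + (T + T))) (insert 0 ((\<lambda>m::nat. int m + 1) ` UNIV \<union> (\<lambda>m::nat. - int m - 1) ` UNIV))"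
    by (rule has_sum_insert[OF _ gPN]) auto
  moreover have "insert 0 ((\<lambda>m::nat. int m + 1) ` UNIV \<union> (\<lambda>m::nat. - int m - 1) ` UNIV) = UNIV"
  proof -
    have "x \<in> insert 0 ((\<lambda>m::nat. int m + 1) ` UNIV \<union> (\<lambda>m::nat. - int m - 1) ` UNIV)" for x :: int
    proof (cases "x > 0")
      case True
      hence "x = int (nat (x - 1)) + 1" by simp
      thus ?thesis by blast
    next
      case False
      show ?thesis
      proof (cases "x = 0")
        case False
        with \<open>\<not> x > 0\<close> have "x = - int (nat (- x - 1)) - 1" by simp
        thus ?thesis by blast
      qed simp
    qed
    thus ?thesis by blast
  qed
  ultimately have "(g has_sum (1 + 2 * T)) UNIV" by (simp add: g_def)
  hence jt: "jtheta z = 1 + 2 * T"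
    unfolding jtheta_def by (simp add: infsumI g_def q_def)
  have us: "u sums (T + 1)"
    using vs unfolding v_def by (subst (asm) sums_Suc_iff) (simp add: u_def)
  define w where "w = (\<lambda>m::nat. th (m ^ 2) * q ^ (m ^ 2))"
  have w_eq: "w = (\<lambda>m. 2 * u m - (if m = 0 then 1 else 0))"
  proof
    fix m :: nat show "w m = 2 * u m - (if m = 0 then 1 else 0)"
      by (cases "m = 0") (auto simp: w_def u_def th_def)
  qed
  have "w sums (2 * (T + 1) - 1)"
    unfolding w_eq by (intro sums_diff sums_mult us) (rule sums_single[of 0 "\<lambda>_. 1", simplified])
  hence ws: "(\<lambda>m. (\<lambda>n. th n * q ^ n) (m ^ 2)) sums (1 + 2 * T)"
    by (simp add: w_def algebra_simps)
  have sm: "strict_mono (\<lambda>m::nat. m ^ 2)"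
    by (rule strict_monoI) (simp add: power_strict_mono)
  have "(\<lambda>n. th n * q ^ n) sums (1 + 2 * T)"
  proof -
    have z0: "th n * q ^ n = 0" if "n \<notin> range (\<lambda>m::nat. m ^ 2)" for n
    proof -
      have "n \<noteq> 0" using that by (metis power_zero_numeral rangeI)
      moreover have "\<not> (\<exists>m. n = m ^ 2)" using that by auto
      ultimately show ?thesis by (simp add: th_def)
    qed
    show ?thesis using sums_mono_reindex[OF sm, of "\<lambda>n. th n * q ^ n", OF z0] ws by simp
  qed
  thus "(\<lambda>n. th n * qvar z ^ n) sums jtheta z" by (simp add: jt q_def)
qed

definition b4 :: "(nat \<Rightarrow> complex) \<Rightarrow> nat \<Rightarrow> complex" where
  "b4 a n = (if 4 dvd n then a (n div 4) else 0)"

definition dd :: "nat \<Rightarrow> nat \<Rightarrow> nat" where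
  "dd N l = nat \<bar>2 * int l - int N\<bar>"

lemma dd_le: "l \<le> N \<Longrightarrow> dd N l \<le> N"
  unfolding dd_def by linarith

lemma dd_eq_iff: "dd N l = m \<longleftrightarrow> (2 * l = N + m \<or> 2 * l + m = N)"
  unfolding dd_def by linarith

lemma dd_sq: assumes "l \<le> N" shows "N^2 - (dd N l)^2 = 4 * (l * (N - l))"
proof -
  have i1: "int (dd N l) = \<bar>2 * int l - int N\<bar>" by (simp add: dd_def)
  have i2: "int ((dd N l)^2) = (2 * int l - int N)^2" using i1 by (simp add: power2_abs)
  have le: "(dd N l)^2 \<le> N^2" using dd_le[OF assms] by (simp add: power_mono)
  have "int (N^2 - (dd N l)^2) = int (N^2) - int ((dd N l)^2)" using le by (simp add: of_nat_diff)
  also have "\<dots> = int (4 * (l * (N - l)))" unfolding i2 using assms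
    by (simp add: of_nat_diff power2_eq_square algebra_simps)
  finally show ?thesis by (simp only: of_nat_eq_iff)
qed

lemma th_sq: "th (m^2) = (if m = 0 then 1 else 2)"
  unfolding th_def by auto

lemma fiber:
  fixes \<Phi> :: "nat \<Rightarrow> nat \<Rightarrow> complex"
  shows "(\<Sum>j\<le>N^2. th j * (b4 a (N^2 - j) * \<Phi> j (N^2 - j))) =
         (\<Sum>l\<le>N. a (l * (N - l)) * \<Phi> ((dd N l)^2) (4 * (l * (N - l))))"
proof -
  define h where "h = (\<lambda>j. b4 a (N^2 - j) * \<Phi> j (N^2 - j))"
  have inj: "inj_on (\<lambda>m::nat. m^2) {..N}" by (rule inj_onI) (simp add: power2_eq_iff_nonneg)
  have "(\<Sum>j\<le>N^2. th j * h j) = (\<Sum>j\<in>(\<lambda>m. m^2) ` {..N}. th j * h j)"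
  proof (rule sum.mono_neutral_right)
    show "(\<lambda>m. m^2) ` {..N} \<subseteq> {..N^2}" by (auto simp: power_mono)
    show "\<forall>j\<in>{..N^2} - (\<lambda>m. m^2) ` {..N}. th j * h j = 0"
    proof
      fix j assume j: "j \<in> {..N^2} - (\<lambda>m. m^2) ` {..N}"
      have "\<not> (\<exists>m. j = m^2)"
      proof
        assume "\<exists>m. j = m^2"
        then obtain m where m: "j = m^2" by blast
        have "m \<le> N"
        proof (rule ccontr)
          assume "\<not> m \<le> N"
          hence "N^2 < m^2" by (simp add: power_strict_mono)
          thus False using j m by auto
        qed
        thus False using j m by auto
      qed
      moreover have "j \<noteq> 0" using j by (metis DiffD2 atMost_iff image_eqI power_zero_numeral zero_le)
      ultimately show "th j * h j = 0" by (simp add: th_def)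
    qed
  qed auto
  also have "\<dots> = (\<Sum>m\<le>N. th (m^2) * h (m^2))"
    by (subst sum.reindex[OF inj]) simp
  also have "\<dots> = (\<Sum>m\<le>N. of_nat (card {l \<in> {..N}. dd N l = m}) * h (m^2))"
  proof (rule sum.cong[OF refl])
    fix m assume "m \<in> {..N}"
    hence m: "m \<le> N" by simp
    show "th (m^2) * h (m^2) = of_nat (card {l \<in> {..N}. dd N l = m}) * h (m^2)"
    proof (cases "even (N + m)")
      case True
      have S: "{l \<in> {..N}. dd N l = m} = {(N + m) div 2, (N - m) div 2}"
        using True m by (auto simp: dd_eq_iff; presburger)
      have "card {(N + m) div 2, (N - m) div 2} = (if m = 0 then 1 else 2)"
        using True m by (auto simp: card_insert_if; presburger)
      thus ?thesis unfolding S th_sq by simp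
    next
      case False
      have "\<not> 4 dvd (N^2 - m^2)"
      proof
        assume "4 dvd (N^2 - m^2)"
        hence "even (N^2 - m^2)" by (metis dvd_trans even_numeral)
        moreover have "m^2 \<le> N^2" using m by (simp add: power_mono)
        ultimately show False using False by (auto simp: power2_eq_square)
      qed
      hence "h (m^2) = 0" by (simp add: h_def b4_def)
      thus ?thesis by simp
    qed
  qed
  also have "\<dots> = (\<Sum>m\<le>N. \<Sum>l\<in>{l \<in> {..N}. dd N l = m}. h ((dd N l)^2))"
    by (rule sum.cong[OF refl]) simp
  also have "\<dots> = (\<Sum>l\<le>N. h ((dd N l)^2))"
    by (rule sum.group) (auto simp: dd_le)
  also have "\<dots> = (\<Sum>l\<le>N. a (l * (N - l)) * \<Phi> ((dd N l)^2) (4 * (l * (N - l))))"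
  proof (rule sum.cong[OF refl])
    fix l assume "l \<in> {..N}"
    hence l: "l \<le> N" by simp
    show "h ((dd N l)^2) = a (l * (N - l)) * \<Phi> ((dd N l)^2) (4 * (l * (N - l)))"
      unfolding h_def dd_sq[OF l] by (simp add: b4_def)
  qed
  finally show ?thesis by (simp add: h_def)
qed

definition Wp :: "int \<Rightarrow> nat \<Rightarrow> complex \<Rightarrow> complex \<Rightarrow> complex" where
  "Wp k \<nu> x y = (\<Sum>i=0..\<nu>. G_rc (1/2) (real_of_int k) \<nu> i * x ^ i * y ^ (\<nu> - i))"

definition Lp :: "int \<Rightarrow> nat \<Rightarrow> complex \<Rightarrow> complex \<Rightarrow> complex" where
  "Lp k \<nu> x y = (\<Sum>i=0..2*\<nu>. G_rc (real_of_int k) (real_of_int k) (2*\<nu>) i * x ^ i * y ^ (2*\<nu> - i))"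

definition facc :: "int \<Rightarrow> nat \<Rightarrow> complex" where
  "facc k \<nu> = fact (nat (k + 2 * int \<nu> - 1)) / fact (nat (k + int \<nu> - 1))"

lemma LW: "Lp k \<nu> x y = facc k \<nu> * Wp k \<nu> ((x - y)^2) (4 * x * y)"
proof (cases "k + 2 * int \<nu> \<ge> 1")
  case False
  have g1: "Gamma (of_real (real_of_int k) + of_nat (2*\<nu>) :: complex) = 0"
    unfolding gamma_int using False by simp
  have g2: "Gamma (of_real (real_of_int k) + of_nat \<nu> :: complex) = 0"
    unfolding gamma_int using False by simp
  have "Lp k \<nu> x y = 0" unfolding Lp_def G_rc_def g1 by simp
  moreover have "Wp k \<nu> ((x - y)^2) (4 * x * y) = 0" unfolding Wp_def G_rc_def g2 by simp
  ultimately show ?thesis by simp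
next
  case True
  define n where "n = nat (k + 2 * int \<nu> - 1)"
  have "Lp k \<nu> x y = (\<Sum>i\<le>2*\<nu>. fact (2*\<nu>) * ((-1)^i * of_nat (n choose i) * of_nat (n choose (2*\<nu>-i)) * x^i * y^(2*\<nu>-i)))"
    unfolding Lp_def atLeast0AtMost
  proof (rule sum.cong[OF refl])
    fix i assume "i \<in> {..2*\<nu>}"
    hence i: "i \<le> 2*\<nu>" by simp
    show "G_rc (real_of_int k) (real_of_int k) (2*\<nu>) i * x ^ i * y ^ (2*\<nu> - i) =
      fact (2*\<nu>) * ((-1)^i * of_nat (n choose i) * of_nat (n choose (2*\<nu>-i)) * x^i * y^(2*\<nu>-i))"
      unfolding H_coeff[OF i True] n_def[symmetric] by (simp only: mult_ac)
  qed
  also have "\<dots> = fact (2*\<nu>) * (\<Sum>b\<le>\<nu>. of_nat (n choose b) * of_nat ((n - b) choose (2*\<nu>-2*b)) * (-(x*y))^b * (y-x)^(2*\<nu>-2*b))"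
    unfolding sum_distrib_left[symmetric] poly_id ..
  finally have L: "Lp k \<nu> x y = \<dots>" .
  have "facc k \<nu> * Wp k \<nu> ((x - y)^2) (4 * x * y) =
     (\<Sum>i=0..\<nu>. facc k \<nu> * G_rc (1/2) (real_of_int k) \<nu> i * ((x - y)^2) ^ i * (4 * x * y) ^ (\<nu> - i))"
    unfolding Wp_def sum_distrib_left by (simp add: mult_ac)
  also have "\<dots> = (\<Sum>b=0..\<nu>. facc k \<nu> * G_rc (1/2) (real_of_int k) \<nu> (\<nu> - b) * ((x - y)^2) ^ (\<nu> - b) * (4 * x * y) ^ (\<nu> - (\<nu> - b)))"
    by (subst sum.atLeastAtMost_rev) simp
  also have "\<dots> = (\<Sum>b\<le>\<nu>. fact (2*\<nu>) * (of_nat (n choose b) * of_nat ((n - b) choose (2*\<nu>-2*b)) * (-(x*y))^b * (y-x)^(2*\<nu>-2*b)))"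
    unfolding atLeast0AtMost
  proof (rule sum.cong[OF refl])
    fix b assume "b \<in> {..\<nu>}"
    hence b: "b \<le> \<nu>" by simp
    have e1: "\<nu> - (\<nu> - b) = b" using b by simp
    have e2: "((x - y)^2) ^ (\<nu> - b) = (y - x) ^ (2*\<nu> - 2*b)"
    proof -
      have "((x - y)^2) ^ (\<nu> - b) = ((y - x)^2) ^ (\<nu> - b)" by (simp only: power2_commute)
      also have "\<dots> = (y - x) ^ (2 * (\<nu> - b))" by (simp only: power_mult)
      finally show ?thesis by (simp only: diff_mult_distrib2)
    qed
    have e3: "(4 * x * y) ^ b = 4 ^ b * (x * y) ^ b" by (simp add: power_mult_distrib mult.assoc)
    have e4: "(-(x*y)) ^ b = (-1) ^ b * (x * y) ^ b" by (simp add: power_minus[of "x*y"])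
    have gc: "facc k \<nu> * G_rc (1/2) (real_of_int k) \<nu> (\<nu> - b) * 4 ^ b =
       (-1) ^ b * fact (2 * \<nu>) * of_nat (n choose b) * of_nat ((n - b) choose (2 * \<nu> - 2 * b))"
      unfolding facc_def n_def by (rule Gc_coeff[OF b True])
    show "facc k \<nu> * G_rc (1/2) (real_of_int k) \<nu> (\<nu> - b) * ((x - y)^2) ^ (\<nu> - b) * (4 * x * y) ^ (\<nu> - (\<nu> - b))
      = fact (2*\<nu>) * (of_nat (n choose b) * of_nat ((n - b) choose (2*\<nu>-2*b)) * (-(x*y))^b * (y-x)^(2*\<nu>-2*b))"
    proof -
      have "facc k \<nu> * G_rc (1/2) (real_of_int k) \<nu> (\<nu> - b) * ((x - y)^2) ^ (\<nu> - b) * (4 * x * y) ^ (\<nu> - (\<nu> - b))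
         = (facc k \<nu> * G_rc (1/2) (real_of_int k) \<nu> (\<nu> - b) * 4 ^ b) * ((x * y) ^ b * (y - x) ^ (2*\<nu> - 2*b))"
        unfolding e1 e2 e3 by (simp only: mult_ac)
      also have "\<dots> = ((-1) ^ b * fact (2 * \<nu>) * of_nat (n choose b) * of_nat ((n - b) choose (2 * \<nu> - 2 * b))) * ((x * y) ^ b * (y - x) ^ (2*\<nu> - 2*b))"
        unfolding gc ..
      also have "\<dots> = fact (2*\<nu>) * (of_nat (n choose b) * of_nat ((n - b) choose (2*\<nu>-2*b)) * (-(x*y))^b * (y-x)^(2*\<nu>-2*b))"
        unfolding e4 by (simp only: mult_ac)
      finally show ?thesis .
    qed
  qed
  also have "\<dots> = fact (2*\<nu>) * (\<Sum>b\<le>\<nu>. of_nat (n choose b) * of_nat ((n - b) choose (2*\<nu>-2*b)) * (-(x*y))^b * (y-x)^(2*\<nu>-2*b))"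
    unfolding sum_distrib_left ..
  finally show ?thesis using L by simp
qed

lemma swap_coeff:
  fixes G :: "nat \<Rightarrow> complex" and x y p q :: "nat \<Rightarrow> complex"
  shows "(\<Sum>i\<in>I. G i * (\<Sum>j\<le>n. x j ^ i * p j * (y j ^ (m - i) * q j))) =
         (\<Sum>j\<le>n. p j * q j * (\<Sum>i\<in>I. G i * x j ^ i * y j ^ (m - i)))"
proof -
  have "(\<Sum>i\<in>I. G i * (\<Sum>j\<le>n. x j ^ i * p j * (y j ^ (m - i) * q j))) =
        (\<Sum>i\<in>I. \<Sum>j\<le>n. p j * q j * (G i * x j ^ i * y j ^ (m - i)))"
    unfolding sum_distrib_left by (rule sum.cong[OF refl], rule sum.cong[OF refl]) (simp only: mult_ac)
  also have "\<dots> = (\<Sum>j\<le>n. \<Sum>i\<in>I. p j * q j * (G i * x j ^ i * y j ^ (m - i)))"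
    by (rule sum.swap)
  also have "\<dots> = (\<Sum>j\<le>n. p j * q j * (\<Sum>i\<in>I. G i * x j ^ i * y j ^ (m - i)))"
    unfolding sum_distrib_left ..
  finally show ?thesis .
qed

definition cc :: "int \<Rightarrow> nat \<Rightarrow> (nat \<Rightarrow> complex) \<Rightarrow> nat \<Rightarrow> complex" where
  "cc k \<nu> a = (\<lambda>n. \<Sum>i = 0..\<nu>. G_rc (1/2) (real_of_int k) \<nu> i *
        (\<Sum>j\<le>n. (of_nat j) ^ i * th j * ((of_nat (n - j)) ^ (\<nu> - i) * b4 a (n - j))))"

definition ee :: "int \<Rightarrow> nat \<Rightarrow> (nat \<Rightarrow> complex) \<Rightarrow> nat \<Rightarrow> complex" where
  "ee k \<nu> a = (\<lambda>n. \<Sum>i = 0..2*\<nu>. G_rc (real_of_int k) (real_of_int k) (2*\<nu>) i *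
        (\<Sum>j\<le>n. (of_nat j) ^ i * a j * ((of_nat (n - j)) ^ (2*\<nu> - i) * a (n - j))))"

lemma cc_sq: "facc k \<nu> * cc k \<nu> a (N^2) =
   (\<Sum>l\<le>N. a (l * (N - l)) * Lp k \<nu> (of_nat l) (of_nat (N - l)))"
proof -
  have "cc k \<nu> a (N^2) = (\<Sum>j\<le>N^2. th j * (b4 a (N^2 - j) * Wp k \<nu> (of_nat j) (of_nat (N^2 - j))))"
    unfolding cc_def swap_coeff Wp_def by (simp only: mult_ac)
  also have "\<dots> = (\<Sum>l\<le>N. a (l * (N - l)) * Wp k \<nu> (of_nat ((dd N l)^2)) (of_nat (4 * (l * (N - l)))))"
    by (rule fiber)
  also have "\<dots> = (\<Sum>l\<le>N. a (l * (N - l)) * Wp k \<nu> ((of_nat l - of_nat (N - l))^2) (4 * of_nat l * of_nat (N - l)))"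
  proof (rule sum.cong[OF refl])
    fix l assume "l \<in> {..N}"
    hence l: "l \<le> N" by simp
    have i1: "int (dd N l) = \<bar>2 * int l - int N\<bar>" by (simp add: dd_def)
    have "(of_nat ((dd N l)^2) :: complex) = of_int (int ((dd N l)^2))" by simp
    also have "\<dots> = of_int ((2 * int l - int N)^2)" using i1 by (simp add: power2_abs)
    also have "\<dots> = (of_nat l - of_nat (N - l))^2" using l by (simp add: of_nat_diff algebra_simps)
    finally have e1: "(of_nat ((dd N l)^2) :: complex) = (of_nat l - of_nat (N - l))^2" .
    have e2: "(of_nat (4 * (l * (N - l))) :: complex) = 4 * of_nat l * of_nat (N - l)" by simp
    show "a (l * (N - l)) * Wp k \<nu> (of_nat ((dd N l)^2)) (of_nat (4 * (l * (N - l)))) =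
          a (l * (N - l)) * Wp k \<nu> ((of_nat l - of_nat (N - l))^2) (4 * of_nat l * of_nat (N - l))"
      unfolding e1 e2 ..
  qed
  finally have cs: "cc k \<nu> a (N^2) = (\<Sum>l\<le>N. a (l * (N - l)) * Wp k \<nu> ((of_nat l - of_nat (N - l))^2) (4 * of_nat l * of_nat (N - l)))" .
  show ?thesis unfolding cs sum_distrib_left LW by (rule sum.cong[OF refl]) (simp only: mult_ac)
qed

lemma ee_form: "ee k \<nu> a n = (\<Sum>l\<le>n. a l * a (n - l) * Lp k \<nu> (of_nat l) (of_nat (n - l)))"
  unfolding ee_def swap_coeff Lp_def ..

lemma Lp_hom: "Lp k \<nu> (c * x) (c * y) = c ^ (2*\<nu>) * Lp k \<nu> x y"
  unfolding Lp_def sum_distrib_left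
proof (rule sum.cong[OF refl])
  fix i assume "i \<in> {0..2*\<nu>}"
  hence "c ^ i * c ^ (2*\<nu> - i) = c ^ (2*\<nu>)" by (simp flip: power_add)
  thus "G_rc (real_of_int k) (real_of_int k) (2*\<nu>) i * (c * x) ^ i * (c * y) ^ (2*\<nu> - i) =
     c ^ (2*\<nu>) * (G_rc (real_of_int k) (real_of_int k) (2*\<nu>) i * x ^ i * y ^ (2*\<nu> - i))"
  proof -
    have "G_rc (real_of_int k) (real_of_int k) (2*\<nu>) i * (c * x) ^ i * (c * y) ^ (2*\<nu> - i) =
      (G_rc (real_of_int k) (real_of_int k) (2*\<nu>) i * x ^ i * y ^ (2*\<nu> - i)) * (c ^ i * c ^ (2*\<nu> - i))"
      unfolding power_mult_distrib by (simp only: mult_ac)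
    thus ?thesis unfolding \<open>c ^ i * c ^ (2*\<nu> - i) = c ^ (2*\<nu>)\<close> by (simp only: mult_ac)
  qed
qed

lemma hecke_mult:
  assumes "normalized_hecke_eigenform k f a"
  shows "a l * a r = (\<Sum>d | d dvd gcd l r. of_nat d powi (k - 1) * a (l * r div (d * d)))"
proof (cases "l = 0")
  case True
  have a0: "a 0 = 0" using assms by (simp add: normalized_hecke_eigenform_def)
  thus ?thesis using True by simp
next
  case False
  have a1: "a 1 = 1" using assms by (simp add: normalized_hecke_eigenform_def)
  have H: "\<forall>m\<ge>1. \<exists>ev. \<forall>n. hecke_coeff k m a n = ev * a n"
    using assms by (simp add: normalized_hecke_eigenform_def)
  have "l \<ge> 1" using False by simp
  then obtain ev where ev: "\<And>n. hecke_coeff k l a n = ev * a n" using H by blast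
  have "{d. d dvd gcd l 1} = {1::nat}" by auto
  hence "hecke_coeff k l a 1 = a l" by (simp add: hecke_coeff_def)
  hence "ev = a l" using ev[of 1] a1 by simp
  thus ?thesis using ev[of r] by (simp add: hecke_coeff_def)
qed

lemma ee_main:
  assumes hecke: "\<And>l r. a l * a r = (\<Sum>d | d dvd gcd l r. of_nat d powi (k - 1) * a (l * r div (d * d)))"
    and a0: "a 0 = 0"
  shows "ee k \<nu> a n = facc k \<nu> * shimura1_coeff (k + 2 * int \<nu>) (cc k \<nu> a) n"
proof (cases "n = 0")
  case True
  thus ?thesis by (simp add: ee_form a0 shimura1_coeff_def)
next
  case False
  define D where "D = {d. d dvd n}"
  have finD: "finite D" unfolding D_def using False by (simp add: finite_divisors_nat)
  define F where "F = (\<lambda>l d. Lp k \<nu> (of_nat l) (of_nat (n - l)) * (of_nat d powi (k - 1) * a (l * (n - l) div (d * d))))"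
  have "ee k \<nu> a n = (\<Sum>l\<le>n. \<Sum>d\<in>{d. d \<in> D \<and> d dvd l}. F l d)"
    unfolding ee_form
  proof (rule sum.cong[OF refl])
    fix l assume "l \<in> {..n}"
    hence l: "l \<le> n" by simp
    have S: "{d. d dvd gcd l (n - l)} = {d. d \<in> D \<and> d dvd l}"
    proof -
      have "d dvd gcd l (n - l) \<longleftrightarrow> d dvd n \<and> d dvd l" for d
      proof -
        have "n = (n - l) + l" using l by simp
        thus ?thesis by (metis dvd_add dvd_diff_nat gcd_dvd1 gcd_dvd2 gcd_greatest_iff)
      qed
      thus ?thesis unfolding D_def by auto
    qed
    show "a l * a (n - l) * Lp k \<nu> (of_nat l) (of_nat (n - l)) = (\<Sum>d\<in>{d. d \<in> D \<and> d dvd l}. F l d)"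
      unfolding hecke[of l "n - l"] S F_def sum_distrib_right sum_distrib_left by (simp only: mult_ac)
  qed
  also have "\<dots> = (\<Sum>d\<in>D. \<Sum>l\<in>{l. l \<in> {..n} \<and> d dvd l}. F l d)"
    by (rule sum.swap_restrict) (simp_all add: finD)
  also have "\<dots> = (\<Sum>d\<in>D. of_nat d powi (k + 2 * int \<nu> - 1) * (facc k \<nu> * cc k \<nu> a ((n div d)^2)))"
  proof (rule sum.cong[OF refl])
    fix d assume "d \<in> D"
    hence dn: "d dvd n" by (simp add: D_def)
    hence d0: "d > 0" using False by (metis dvd_0_left_iff neq0_conv)
    define M where "M = n div d"
    have nM: "n = d * M" using dn by (simp add: M_def)
    have img: "{l. l \<in> {..n} \<and> d dvd l} = (\<lambda>l'. d * l') ` {..M}"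
    proof (rule set_eqI)
      fix l
      show "l \<in> {l. l \<in> {..n} \<and> d dvd l} \<longleftrightarrow> l \<in> (\<lambda>l'. d * l') ` {..M}"
      proof
        assume "l \<in> {l. l \<in> {..n} \<and> d dvd l}"
        hence l: "l \<le> n" "d dvd l" by auto
        then obtain l' where l': "l = d * l'" by (auto elim: dvdE)
        hence "l' \<le> M" using l(1) nM d0 by simp
        thus "l \<in> (\<lambda>l'. d * l') ` {..M}" using l' by auto
      next
        assume "l \<in> (\<lambda>l'. d * l') ` {..M}"
        thus "l \<in> {l. l \<in> {..n} \<and> d dvd l}" using nM by auto
      qed
    qed
    have inj: "inj_on (\<lambda>l'. d * l') {..M}" using d0 by (auto intro!: inj_onI)
    have pw: "(of_nat d :: complex) powi (k - 1) * of_nat d ^ (2 * \<nu>) = of_nat d powi (k + 2 * int \<nu> - 1)"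
    proof -
      have "(of_nat d :: complex) powi (k + 2 * int \<nu> - 1) = of_nat d powi ((k - 1) + int (2 * \<nu>))"
        by (simp add: algebra_simps)
      also have "\<dots> = of_nat d powi (k - 1) * of_nat d powi int (2 * \<nu>)"
        using d0 by (intro power_int_add) simp
      finally have X: "(of_nat d :: complex) powi (k + 2 * int \<nu> - 1) = of_nat d powi (k - 1) * of_nat d powi int (2 * \<nu>)" .
      show ?thesis using X unfolding power_int_of_nat by simp
    qed
    have "(\<Sum>l\<in>{l. l \<in> {..n} \<and> d dvd l}. F l d) = (\<Sum>l'\<le>M. F (d * l') d)"
      unfolding img by (rule sum.reindex_cong[OF inj refl refl])
    also have "\<dots> = (\<Sum>l'\<le>M. of_nat d powi (k + 2 * int \<nu> - 1) * (a (l' * (M - l')) * Lp k \<nu> (of_nat l') (of_nat (M - l'))))"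
    proof (rule sum.cong[OF refl])
      fix l' assume "l' \<in> {..M}"
      hence l': "l' \<le> M" by simp
      have e1: "n - d * l' = d * (M - l')" using nM by (simp add: diff_mult_distrib2)
      have e2: "d * l' * (d * (M - l')) div (d * d) = l' * (M - l')"
        using d0 by (simp add: mult_ac)
      have e3: "Lp k \<nu> (of_nat (d * l')) (of_nat (d * (M - l'))) = of_nat d ^ (2 * \<nu>) * Lp k \<nu> (of_nat l') (of_nat (M - l'))"
        unfolding of_nat_mult by (rule Lp_hom)
      show "F (d * l') d = of_nat d powi (k + 2 * int \<nu> - 1) * (a (l' * (M - l')) * Lp k \<nu> (of_nat l') (of_nat (M - l')))"
        unfolding F_def e1 e2 e3 pw[symmetric] by (simp only: mult_ac)
    qed
    also have "\<dots> = of_nat d powi (k + 2 * int \<nu> - 1) * (facc k \<nu> * cc k \<nu> a (M^2))"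
      unfolding cc_sq sum_distrib_left ..
    finally show "(\<Sum>l\<in>{l. l \<in> {..n} \<and> d dvd l}. F l d) = of_nat d powi (k + 2 * int \<nu> - 1) * (facc k \<nu> * cc k \<nu> a ((n div d)^2))"
      by (simp add: M_def)
  qed
  also have "\<dots> = facc k \<nu> * shimura1_coeff (k + 2 * int \<nu>) (cc k \<nu> a) n"
    using False by (simp add: shimura1_coeff_def D_def sum_distrib_left mult_ac)
  finally show ?thesis .
qed

theorem proposition2p1:
  fixes k :: int and \<nu> :: nat and f :: "complex \<Rightarrow> complex" and a :: "nat \<Rightarrow> complex"
  assumes "even k"
    and "normalized_hecke_eigenform k f a"
  shows "\<exists>c :: nat \<Rightarrow> complex.
           has_q_expansion (rankin_cohen (1/2) (real_of_int k) \<nu> jtheta (\<lambda>\<tau>. f (4 * \<tau>))) c \<and>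
           has_q_expansion
             (rankin_cohen (real_of_int k) (real_of_int k) (2 * \<nu>) f f)
             (\<lambda>n. (fact (nat (k + 2 * int \<nu> - 1)) / fact (nat (k + int \<nu> - 1)))
                   * shimura1_coeff (k + 2 * int \<nu>) c n)"
proof (intro exI conjI)
  have ha: "has_q_expansion f a" and a0: "a 0 = 0"
    using assms(2) by (simp_all add: normalized_hecke_eigenform_def)
  have h4: "has_q_expansion (\<lambda>\<tau>. f (4 * \<tau>)) (b4 a)"
    using qexp_scale4[OF ha] unfolding b4_def[abs_def] .
  show "has_q_expansion (rankin_cohen (1/2) (real_of_int k) \<nu> jtheta (\<lambda>\<tau>. f (4 * \<tau>))) (cc k \<nu> a)"
    unfolding cc_def by (rule rc_qexp[OF theta_qexp h4])
  have he: "has_q_expansion (rankin_cohen (real_of_int k) (real_of_int k) (2 * \<nu>) f f) (ee k \<nu> a)"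
    unfolding ee_def by (rule rc_qexp[OF ha ha])
  show "has_q_expansion (rankin_cohen (real_of_int k) (real_of_int k) (2 * \<nu>) f f)
             (\<lambda>n. (fact (nat (k + 2 * int \<nu> - 1)) / fact (nat (k + int \<nu> - 1)))
                   * shimura1_coeff (k + 2 * int \<nu>) (cc k \<nu> a) n)"
    by (rule qexp_cong[OF he]) (simp_all add: ee_main[OF hecke_mult[OF assms(2)] a0] facc_def)
qed

end
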